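(* Let $f_i=h_i+\overline{g_i}\in S_H$ with $h_i(z)+g_i(z)=\dfrac{z}{1-z}$ for $i=1,2$. Then for every $0\le t\le1$ the map $f=tf_1+(1-t)f_2$ belongs to $COD_H(0)$, i.e. $f\in S_H$ and $f$ maps $E$ onto a domain that is convex both in the direction of the real axis and in the direction of the imaginary axis.
   Context: $E=\{z\in\mathbb{C}:|z|<1\}$. $S_H$ denotes the class of harmonic, univalent, sense-preserving mappings $f=h+\overline{g}$ of $E$ ($h,g$ analytic, $h'\ne0$, $|g'/h'|<1$) normalized by $f(0)=0$, $f_z(0)=1$. A domain $\Omega$ is convex in the direction $\phi$ ($0\le\phi<\pi$) if every line parallel to the line through $0$ and $e^{i\phi}$ has connected or empty intersection with $\Omega$. $COD_H(\theta)$, $\theta\in[0,\pi/2)$, is the class of $f\in S_H$ mapping $E$ onto domains convex in the directions $\theta$ and $\theta+\pi/2$. *)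

theory Defs
  imports "HOL-Analysis.Analysis"
begin

abbreviation unit_disk :: "complex set" where
  "unit_disk \<equiv> ball 0 1"

definition SH_pair :: "(complex \<Rightarrow> complex) \<Rightarrow> (complex \<Rightarrow> complex) \<Rightarrow> bool" where
  "SH_pair h g \<longleftrightarrow>
     h holomorphic_on unit_disk \<and> g holomorphic_on unit_disk \<and>
     (\<forall>z\<in>unit_disk. deriv h z \<noteq> 0 \<and> norm (deriv g z / deriv h z) < 1) \<and>
     inj_on (\<lambda>z. h z + cnj (g z)) unit_disk \<and>
     h 0 + cnj (g 0) = 0 \<and> deriv h 0 = 1"

definition in_SH :: "(complex \<Rightarrow> complex) \<Rightarrow> bool" where
  "in_SH f \<longleftrightarrow> (\<exists>h g. SH_pair h g \<and> (\<forall>z\<in>unit_disk. f z = h z + cnj (g z)))"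

definition convex_in_direction :: "real \<Rightarrow> complex set \<Rightarrow> bool" where
  "convex_in_direction \<phi> \<Omega> \<longleftrightarrow>
     (\<forall>w. connected ({w + of_real s * cis \<phi> | s. True} \<inter> \<Omega>))"

definition COD_H :: "real \<Rightarrow> (complex \<Rightarrow> complex) \<Rightarrow> bool" where
  "COD_H \<theta> f \<longleftrightarrow> in_SH f \<and>
     convex_in_direction \<theta> (f ` unit_disk) \<and>
     convex_in_direction (\<theta> + pi / 2) (f ` unit_disk)"

end

theory Submission
  imports Defs
begin


definition zw :: "complex \<Rightarrow> complex" where "zw w = w / (1 + w)"

lemma zw_in: assumes "Re w > -1/2" shows "zw w \<in> unit_disk"
proof -
  have ne: "1 + w \<noteq> 0" using assms by (auto simp: complex_eq_iff)
  have "norm w < norm (1 + w)"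
  proof -
    have "(1+Re w)*(1+Re w) - Re w*Re w = 1 + 2*Re w" by algebra
    hence "Re w * Re w < (1+Re w)*(1+Re w)" using assms by linarith
    thus ?thesis by (simp add: cmod_def power2_eq_square real_sqrt_less_iff)
  qed
  thus ?thesis using ne by (simp add: zw_def norm_divide divide_less_eq)
qed

lemma zw_phi: assumes "Re w > -1/2" shows "zw w / (1 - zw w) = w"
proof -
  have ne: "1 + w \<noteq> 0" using assms by (auto simp: complex_eq_iff)
  thus ?thesis by (simp add: zw_def field_simps)
qed

lemma disk_ne1: "z \<in> unit_disk \<Longrightarrow> 1 - z \<noteq> 0" by auto

lemma phi_Re: assumes "z \<in> unit_disk" shows "Re (z / (1 - z)) > -1/2"
proof -
  have n: "norm z < 1" using assms by simp
  have ne: "1 - z \<noteq> 0" using assms by auto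
  have "Re (z / (1 - z)) = (Re z - (Re z ^ 2 + Im z ^ 2)) / ((1 - Re z)^2 + Im z ^ 2)"
    by (simp add: Re_divide power2_eq_square algebra_simps)
  moreover have "(Re z ^ 2 + Im z ^ 2) < 1" using n by (simp add: cmod_def real_sqrt_less_iff)
  moreover have pos: "(1 - Re z)^2 + Im z ^ 2 > 0" using ne
    by (smt (verit) complex_eq_iff one_complex.sel(1) one_complex.simps(2) minus_complex.sel power2_less_0 sum_power2_gt_zero_iff zero_complex.simps)
  ultimately have "(2 * Re (z / (1 - z)) + 1) * ((1 - Re z)^2 + Im z ^ 2) > 0"
    by (simp add: field_simps power2_eq_square)
  hence "2 * Re (z / (1 - z)) + 1 > 0" using pos by (simp add: zero_less_mult_iff)
  thus ?thesis by simp
qed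

lemma zw_inv: assumes "z \<in> unit_disk" shows "zw (z / (1 - z)) = z"
proof -
  have ne: "1 - z \<noteq> 0" using assms by auto
  have "1 + z / (1 - z) = 1 / (1 - z)" using ne by (simp add: field_simps)
  thus ?thesis using ne by (simp add: zw_def)
qed



lemma key_pos:
  fixes a b :: complex
  assumes "norm b < norm a" "a + b \<noteq> 0"
  shows "Re ((a - b) / (a + b)) > 0"
proof -
  have "Re ((a - b) * cnj (a + b)) = norm a ^ 2 - norm b ^ 2"
    using cmod_power2[of a] cmod_power2[of b] by (simp add: algebra_simps power2_eq_square)
  moreover have "norm a ^ 2 - norm b ^ 2 > 0"
    using assms(1) by (smt (verit) norm_ge_zero power_strict_mono zero_less_numeral)
  ultimately have "Re ((a - b) * cnj (a + b)) > 0" by simp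
  moreover have "(a - b) / (a + b) = (a - b) * cnj (a + b) / of_real (norm (a + b) ^ 2)"
  proof -
    have c0: "cnj (a + b) \<noteq> 0" using assms(2) by (metis complex_cnj_zero_iff)
    have "(a - b) / (a + b) = (a - b) * cnj (a + b) / ((a + b) * cnj (a + b))"
      using c0 by simp
    also have "(a + b) * cnj (a + b) = of_real (norm (a + b) ^ 2)" by (rule complex_norm_square[symmetric])
    finally show ?thesis .
  qed
  ultimately show ?thesis using assms(2) by (simp add: Re_divide_of_real)
qed

lemma deriv_sum_phi:
  assumes hol: "h holomorphic_on unit_disk" "g holomorphic_on unit_disk"
    and sum: "\<forall>z\<in>unit_disk. h z + g z = z / (1 - z)"
    and z: "z \<in> unit_disk"
  shows "deriv h z + deriv g z = 1 / (1 - z)^2"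
proof -
  have hd: "(h has_field_derivative deriv h z) (at z)" using holomorphic_derivI[OF hol(1) _ z] by simp
  have gd: "(g has_field_derivative deriv g z) (at z)" using holomorphic_derivI[OF hol(2) _ z] by simp
  have ne: "1 - z \<noteq> 0" using z by auto
  have pd: "((\<lambda>z. z / (1 - z)) has_field_derivative 1 / (1 - z)^2) (at z)"
    by (rule derivative_eq_intros refl | use ne in \<open>simp add: field_simps power2_eq_square\<close>)+
  have "((\<lambda>z. h z + g z) has_field_derivative 1 / (1 - z)^2) (at z)"
    by (rule has_field_derivative_transform_within_open[OF pd _ z]) (use sum in auto)
  moreover have "((\<lambda>z. h z + g z) has_field_derivative deriv h z + deriv g z) (at z)"
    using hd gd by (rule derivative_intros)
  ultimately show ?thesis using DERIV_unique by blast
qed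

lemma mono_arc:
  assumes hol: "h holomorphic_on unit_disk" "g holomorphic_on unit_disk"
    and sum: "\<forall>z\<in>unit_disk. h z + g z = z / (1 - z)"
    and sp: "\<forall>z\<in>unit_disk. norm (deriv g z) < norm (deriv h z)"
    and c: "c > -1/2" and s: "s1 < s2"
  shows "Im (h (zw (Complex c s1)) - g (zw (Complex c s1))) < Im (h (zw (Complex c s2)) - g (zw (Complex c s2)))"
proof -
  define \<Phi> where "\<Phi> s = Im (h (zw (Complex c s)) - g (zw (Complex c s)))" for s
  have der: "\<exists>y. DERIV \<Phi> s :> y \<and> y > 0" for s
  proof -
    define w where "w = Complex c s"
    have Rw: "Re w > -1/2" using c by (simp add: w_def)
    have ne: "1 + w \<noteq> 0" using Rw by (auto simp: complex_eq_iff)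
    define z where "z = zw w"
    have zD: "z \<in> unit_disk" using zw_in[OF Rw] by (simp add: z_def)
    have hd: "(h has_field_derivative deriv h z) (at z)" using holomorphic_derivI[OF hol(1) _ zD] by simp
    have gd: "(g has_field_derivative deriv g z) (at z)" using holomorphic_derivI[OF hol(2) _ zD] by simp
    have zwd: "(zw has_field_derivative 1 / (1 + w)^2) (at w)"
      unfolding zw_def[abs_def]
      by (rule derivative_eq_intros refl | use ne in \<open>simp add: field_simps power2_eq_square\<close>)+
    have Gd: "((\<lambda>w. h (zw w) - g (zw w)) has_field_derivative (deriv h z - deriv g z) * (1 / (1 + w)^2)) (at w)"
      using DERIV_diff[OF DERIV_chain2[OF hd[unfolded z_def] zwd] DERIV_chain2[OF gd[unfolded z_def] zwd]] unfolding z_def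
      by (simp add: diff_divide_distrib)
    have ld: "((\<lambda>s. Complex c s) has_vector_derivative \<i>) (at s)"
    proof -
      have "(\<lambda>s. Complex c s) = (\<lambda>s. of_real c + of_real s * \<i>)" by (auto simp: complex_eq_iff)
      moreover have "((\<lambda>s. of_real c + of_real s * \<i> :: complex) has_vector_derivative \<i>) (at s)"
        by (rule derivative_eq_intros refl | simp)+
      ultimately show ?thesis by simp
    qed
    have "((\<lambda>s. h (zw (Complex c s)) - g (zw (Complex c s))) has_vector_derivative
            \<i> * ((deriv h z - deriv g z) * (1 / (1 + w)^2))) (at s)"
      using field_vector_diff_chain_at[OF ld Gd[unfolded w_def]] by (simp add: o_def w_def)
    hence D: "DERIV \<Phi> s :> Im (\<i> * ((deriv h z - deriv g z) * (1 / (1 + w)^2)))"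
      unfolding \<Phi>_def by (rule has_field_derivative_Im)
    have sumd: "deriv h z + deriv g z = 1 / (1 - z)^2"
      by (rule deriv_sum_phi[OF hol sum zD])
    have oz: "1 - z = 1 / (1 + w)" using ne by (simp add: z_def zw_def field_simps)
    have "(deriv h z - deriv g z) * (1 / (1 + w)^2) = (deriv h z - deriv g z) / (deriv h z + deriv g z)"
      using ne by (simp add: sumd oz power2_eq_square)
    moreover have "deriv h z + deriv g z \<noteq> 0" using sumd ne oz by simp
    moreover have "Re ((deriv h z - deriv g z) / (deriv h z + deriv g z)) > 0"
      using key_pos sp zD \<open>deriv h z + deriv g z \<noteq> 0\<close> by simp
    ultimately have "Re ((deriv h z - deriv g z) * (1 / (1 + w)^2)) > 0"
      by metis
    moreover have "Im (\<i> * ((deriv h z - deriv g z) * (1 / (1 + w)^2))) = Re ((deriv h z - deriv g z) * (1 / (1 + w)^2))"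
      by (simp only: Im_i_times)
    ultimately show ?thesis using D by metis
  qed
  show ?thesis using DERIV_pos_imp_increasing[OF s der] by (simp add: \<Phi>_def)
qed



lemma Re_f: assumes "\<forall>z\<in>unit_disk. h z + g z = z / (1 - z)" "z \<in> unit_disk"
  shows "Re (h z + cnj (g z)) = Re (z / (1 - z))"
  using assms by (metis complex_cnj_cnj cnj.sel(1) plus_complex.sel(1))

lemma Im_f: "Im (h z + cnj (g z)) = Im (h z - g z)" by simp

lemma zw_param: assumes "z \<in> unit_disk"
  shows "z = zw (Complex (Re (z / (1 - z))) (Im (z / (1 - z))))"
  using zw_inv[OF assms] by simp

lemma inj_gen:
  assumes hol: "h holomorphic_on unit_disk" "g holomorphic_on unit_disk"
    and sum: "\<forall>z\<in>unit_disk. h z + g z = z / (1 - z)"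
    and sp: "\<forall>z\<in>unit_disk. norm (deriv g z) < norm (deriv h z)"
  shows "inj_on (\<lambda>z. h z + cnj (g z)) unit_disk"
proof (rule inj_onI)
  fix z1 z2 assume z1: "z1 \<in> unit_disk" and z2: "z2 \<in> unit_disk"
    and eq: "h z1 + cnj (g z1) = h z2 + cnj (g z2)"
  define c where "c = Re (z1 / (1 - z1))"
  have c2: "c = Re (z2 / (1 - z2))" using Re_f[OF sum z1] Re_f[OF sum z2] eq c_def by metis
  have cgt: "c > -1/2" using phi_Re[OF z1] c_def by simp
  define s1 where "s1 = Im (z1 / (1 - z1))"
  define s2 where "s2 = Im (z2 / (1 - z2))"
  have e1: "z1 = zw (Complex c s1)" using zw_param[OF z1] c_def s1_def by simp
  have e2: "z2 = zw (Complex c s2)" using zw_param[OF z2] c2 s2_def by simp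
  have ieq: "Im (h z1 - g z1) = Im (h z2 - g z2)" using eq Im_f by metis
  show "z1 = z2"
  proof (cases s1 s2 rule: linorder_cases)
    case less
    from mono_arc[OF hol sum sp cgt less] ieq e1 e2 show ?thesis by simp
  next
    case greater
    from mono_arc[OF hol sum sp cgt greater] ieq e1 e2 show ?thesis by simp
  qed (use e1 e2 in simp)
qed

lemma vert_gen:
  assumes hol: "h holomorphic_on unit_disk" "g holomorphic_on unit_disk"
    and sum: "\<forall>z\<in>unit_disk. h z + g z = z / (1 - z)"
  shows "convex_in_direction (pi/2) ((\<lambda>z. h z + cnj (g z)) ` unit_disk)"
  unfolding convex_in_direction_def
proof
  fix w :: complex
  define F where "F = (\<lambda>z. h z + cnj (g z))"
  define L where "L = {w + of_real s * cis (pi/2) | s. True}"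
  have L: "L = {x. Re x = Re w}"
    unfolding L_def
  proof (intro set_eqI iffI)
    fix x assume "x \<in> {w + of_real s * cis (pi/2) | s. True}"
    thus "x \<in> {x. Re x = Re w}" by (auto simp: cis_def)
  next
    fix x assume "x \<in> {x. Re x = Re w}"
    hence "x = w + of_real (Im x - Im w) * cis (pi/2)" by (simp add: cis_def complex_eq_iff)
    thus "x \<in> {w + of_real s * cis (pi/2) | s. True}" by blast
  qed
  show "connected ({w + of_real s * cis (pi/2) | s. True} \<inter> (\<lambda>z. h z + cnj (g z)) ` unit_disk)"
  proof (cases "Re w > -1/2")
    case False
    have "\<forall>z\<in>unit_disk. Re (F z) > -1/2" using Re_f[OF sum] phi_Re F_def by simp
    hence "L \<inter> F ` unit_disk = {}" using False unfolding L by force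
    thus ?thesis using L_def F_def by auto
  next
    case True
    define c where "c = Re w"
    have cgt: "c > -1/2" using True c_def by simp
    have eqs: "L \<inter> F ` unit_disk = (\<lambda>s. F (zw (Complex c s))) ` UNIV"
    proof
      show "L \<inter> F ` unit_disk \<subseteq> range (\<lambda>s. F (zw (Complex c s)))"
      proof
        fix x assume "x \<in> L \<inter> F ` unit_disk"
        then obtain z where z: "z \<in> unit_disk" "Re (F z) = Re w" "x = F z" unfolding L by auto
        have "Re (z / (1 - z)) = c" using Re_f[OF sum z(1)] z(2) F_def c_def by simp
        hence "z = zw (Complex c (Im (z / (1 - z))))" using zw_param[OF z(1)] by simp
        thus "x \<in> range (\<lambda>s. F (zw (Complex c s)))" using z(3) by (metis rangeI)
      qed
    next
      show "range (\<lambda>s. F (zw (Complex c s))) \<subseteq> L \<inter> F ` unit_disk"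
      proof
        fix x assume "x \<in> range (\<lambda>s. F (zw (Complex c s)))"
        then obtain s where x: "x = F (zw (Complex c s))" by auto
        have Rw: "Re (Complex c s) > -1/2" using cgt by simp
        have zD: "zw (Complex c s) \<in> unit_disk" using zw_in[OF Rw] .
        have "Re x = Re w"
          using Re_f[OF sum zD] zw_phi[OF Rw] F_def c_def x by simp
        thus "x \<in> L \<inter> F ` unit_disk" using zD x unfolding L by simp
      qed
    qed
    have cont: "continuous_on UNIV (\<lambda>s. F (zw (Complex c s)))"
    proof -
      have c1: "continuous_on UNIV (\<lambda>s. zw (Complex c s))"
      proof -
        have "(\<lambda>s. zw (Complex c s)) = (\<lambda>s. (of_real c + of_real s * \<i>) / (1 + (of_real c + of_real s * \<i>)))"
        proof -
          have "\<And>s. Complex c s = of_real c + of_real s * \<i>" by (simp add: complex_eq_iff)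
          thus ?thesis by (simp add: zw_def)
        qed
        moreover have "continuous_on UNIV (\<lambda>s. (of_real c + of_real s * \<i>) / (1 + (of_real c + of_real s * \<i>)))"
          using cgt by (intro continuous_intros) (auto simp: complex_eq_iff)
        ultimately show ?thesis by (simp only:)
      qed
      have im: "(\<lambda>s. zw (Complex c s)) ` UNIV \<subseteq> unit_disk"
        using zw_in cgt by auto
      have cF: "continuous_on unit_disk F"
        unfolding F_def
        by (intro continuous_intros holomorphic_on_imp_continuous_on hol)
      show ?thesis using continuous_on_compose2[OF cF c1 im] .
    qed
    have "connected ((\<lambda>s. F (zw (Complex c s))) ` UNIV)"
      by (rule connected_continuous_image[OF cont connected_UNIV])
    thus ?thesis using eqs L_def F_def by simp
  qed
qed



lemma valley:
  fixes U V :: "real \<Rightarrow> real \<Rightarrow> real"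
  assumes N: "\<And>x s x' s'. x > -1/2 \<Longrightarrow> x' > -1/2 \<Longrightarrow> (x, s) \<noteq> (x', s') \<Longrightarrow>
                 (U x' s' - U x s) * (x' - x) + (V x' s' - V x s) * (s' - s) > 0"
    and x: "-1/2 < x1" "x1 < x0" "x0 < x2" and dp: "\<delta> > 0"
    and b1: "\<And>\<sigma>. V x0 \<sigma> + \<delta> \<le> V x1 s1" and b2: "\<And>\<sigma>. V x0 \<sigma> + \<delta> \<le> V x2 s2"
  shows False
proof -
  define u1 where "u1 = U x1 s1"
  define u2 where "u2 = U x2 s2"
  define a1 where "a1 = x0 - x1"
  have a1: "a1 > 0" using x by (simp add: a1_def)
  define \<sigma> where "\<sigma> = max s1 s2 + \<bar>u2 - u1\<bar> * a1 / \<delta> + 1"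
  have q: "\<bar>u2 - u1\<bar> * a1 / \<delta> \<ge> 0" using a1 dp by simp
  have \<sigma>1: "\<sigma> - s1 \<ge> \<bar>u2 - u1\<bar> * a1 / \<delta> + 1" unfolding \<sigma>_def by simp
  have \<sigma>2: "\<sigma> > s2" unfolding \<sigma>_def using q by simp
  have \<sigma>1': "\<sigma> > s1" using \<sigma>1 q by simp
  define Um where "Um = U x0 \<sigma>"
  define Vm where "Vm = V x0 \<sigma>"
  have n1: "(Um - u1) * a1 + (Vm - V x1 s1) * (\<sigma> - s1) > 0"
    using N[of x1 x0 s1 \<sigma>] x unfolding Um_def Vm_def u1_def a1_def by auto
  have n2: "(u2 - Um) * (x2 - x0) + (V x2 s2 - Vm) * (s2 - \<sigma>) > 0"
    using N[of x0 x2 \<sigma> s2] x unfolding Um_def Vm_def u2_def by auto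
  have "(Vm - V x1 s1) * (\<sigma> - s1) \<le> (-\<delta>) * (\<sigma> - s1)"
    using b1[of \<sigma>] \<sigma>1' unfolding Vm_def by (intro mult_right_mono) auto
  with n1 have e1: "(Um - u1) * a1 > \<delta> * (\<sigma> - s1)" by simp
  have "(V x2 s2 - Vm) * (s2 - \<sigma>) \<le> 0"
    using b2[of \<sigma>] dp \<sigma>2 unfolding Vm_def by (intro mult_nonneg_nonpos) auto
  with n2 have "(u2 - Um) * (x2 - x0) > 0" by simp
  hence "u2 > Um" using x by (simp add: zero_less_mult_iff)
  hence "(u2 - u1) * a1 > (Um - u1) * a1" using a1 by (intro mult_strict_right_mono) auto
  with e1 have e2: "(u2 - u1) * a1 > \<delta> * (\<sigma> - s1)" by simp
  have "\<delta> * (\<sigma> - s1) \<ge> \<delta> * (\<bar>u2 - u1\<bar> * a1 / \<delta> + 1)"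
    using \<sigma>1 dp by (intro mult_left_mono) auto
  also have "\<delta> * (\<bar>u2 - u1\<bar> * a1 / \<delta> + 1) = \<bar>u2 - u1\<bar> * a1 + \<delta>" using dp by (simp add: field_simps)
  finally have "\<delta> * (\<sigma> - s1) \<ge> \<bar>u2 - u1\<bar> * a1 + \<delta>" .
  moreover have "\<bar>u2 - u1\<bar> * a1 \<ge> (u2 - u1) * a1" using a1 by (intro mult_right_mono) auto
  ultimately show False using e2 dp by linarith
qed

lemma noshiro:
  fixes \<Psi> :: "complex \<Rightarrow> complex"
  assumes D: "\<And>w. Re w > -1/2 \<Longrightarrow> \<exists>D. (\<Psi> has_field_derivative D) (at w) \<and> Re D > 0"
    and w: "Re w > -1/2" "Re w' > -1/2" "w \<noteq> w'"
  shows "Re ((\<Psi> w' - \<Psi> w) * cnj (w' - w)) > 0"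
proof -
  define \<Delta> where "\<Delta> = w' - w"
  have \<Delta>0: "\<Delta> \<noteq> 0" using w by (simp add: \<Delta>_def)
  define k where "k \<tau> = Re (\<Psi> (w + of_real \<tau> * \<Delta>) * cnj \<Delta>)" for \<tau> :: real
  have der: "\<exists>y. DERIV k \<tau> :> y \<and> y > 0" if "0 \<le> \<tau>" "\<tau> \<le> 1" for \<tau>
  proof -
    have "Re (w + of_real \<tau> * \<Delta>) = (1 - \<tau>) * Re w + \<tau> * Re w'"
      by (simp add: \<Delta>_def algebra_simps)
    also have "\<dots> > -1/2"
    proof -
      have "(1 - \<tau>) * Re w \<ge> (1 - \<tau>) * (-1/2)" using w that by (intro mult_left_mono) auto
      moreover have "\<tau> * Re w' \<ge> \<tau> * (-1/2)" using w that by (intro mult_left_mono) auto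
      moreover have "(1 - \<tau>) * Re w > (1 - \<tau>) * (-1/2) \<or> \<tau> * Re w' > \<tau> * (-1/2)"
      proof (cases "\<tau> = 0")
        case True thus ?thesis using w by simp
      next
        case False hence "\<tau> > 0" using that by simp
        hence "\<tau> * Re w' > \<tau> * (-1/2)" using w by (intro mult_strict_left_mono) auto
        thus ?thesis by simp
      qed
      ultimately show ?thesis by (auto simp: field_simps)
    qed
    finally obtain D where Dd: "(\<Psi> has_field_derivative D) (at (w + of_real \<tau> * \<Delta>))" and DR: "Re D > 0"
      using D by blast
    have Dd2: "((\<lambda>z. \<Psi> z * cnj \<Delta>) has_field_derivative D * cnj \<Delta>) (at (w + of_real \<tau> * \<Delta>))"
      using DERIV_cmult_right[OF Dd] by simp
    have ld: "((\<lambda>\<tau>. w + of_real \<tau> * \<Delta>) has_vector_derivative \<Delta>) (at \<tau>)"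
      by (rule derivative_eq_intros refl | simp)+
    have "((\<lambda>\<tau>. \<Psi> (w + of_real \<tau> * \<Delta>) * cnj \<Delta>) has_vector_derivative \<Delta> * (D * cnj \<Delta>)) (at \<tau>)"
      using field_vector_diff_chain_at[OF ld Dd2] by (simp add: o_def)
    hence "DERIV k \<tau> :> Re (\<Delta> * (D * cnj \<Delta>))" unfolding k_def by (rule has_field_derivative_Re)
    moreover have "\<Delta> * (D * cnj \<Delta>) = D * of_real (norm \<Delta> ^ 2)"
    proof -
      have nn: "\<Delta> * cnj \<Delta> = of_real (norm \<Delta> ^ 2)" by (rule complex_norm_square[symmetric])
      have "\<Delta> * (D * cnj \<Delta>) = D * (\<Delta> * cnj \<Delta>)" by (simp add: ac_simps)
      thus ?thesis using nn by simp
    qed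
    moreover have "Re (D * of_real (norm \<Delta> ^ 2)) > 0" using DR \<Delta>0 by simp
    ultimately show ?thesis by metis
  qed
  have "k 0 < k 1" using DERIV_pos_imp_increasing[of 0 1 k] der by simp
  thus ?thesis by (simp add: k_def \<Delta>_def algebra_simps)
qed



lemma psi_deriv:
  assumes hol: "h holomorphic_on unit_disk" "g holomorphic_on unit_disk"
    and sum: "\<forall>z\<in>unit_disk. h z + g z = z / (1 - z)"
    and sp: "\<forall>z\<in>unit_disk. norm (deriv g z) < norm (deriv h z)"
    and Rw: "Re w > -1/2"
  shows "\<exists>D. ((\<lambda>w. h (zw w) - g (zw w)) has_field_derivative D) (at w) \<and> Re D > 0"
proof -
  have ne: "1 + w \<noteq> 0" using Rw by (auto simp: complex_eq_iff)
  define z where "z = zw w"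
  have zD: "z \<in> unit_disk" using zw_in[OF Rw] by (simp add: z_def)
  have hd: "(h has_field_derivative deriv h z) (at z)" using holomorphic_derivI[OF hol(1) _ zD] by simp
  have gd: "(g has_field_derivative deriv g z) (at z)" using holomorphic_derivI[OF hol(2) _ zD] by simp
  have zwd: "(zw has_field_derivative 1 / (1 + w)^2) (at w)"
    unfolding zw_def[abs_def]
    by (rule derivative_eq_intros refl | use ne in \<open>simp add: field_simps power2_eq_square\<close>)+
  have Gd: "((\<lambda>w. h (zw w) - g (zw w)) has_field_derivative (deriv h z - deriv g z) * (1 / (1 + w)^2)) (at w)"
    using DERIV_diff[OF DERIV_chain2[OF hd[unfolded z_def] zwd] DERIV_chain2[OF gd[unfolded z_def] zwd]] unfolding z_def
    by (simp add: diff_divide_distrib)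
  have sumd: "deriv h z + deriv g z = 1 / (1 - z)^2"
    by (rule deriv_sum_phi[OF hol sum zD])
  have oz: "1 - z = 1 / (1 + w)" using ne by (simp add: z_def zw_def field_simps)
  have "(deriv h z - deriv g z) * (1 / (1 + w)^2) = (deriv h z - deriv g z) / (deriv h z + deriv g z)"
    using ne by (simp add: sumd oz power2_eq_square)
  moreover have "deriv h z + deriv g z \<noteq> 0" using sumd ne oz by simp
  moreover have "Re ((deriv h z - deriv g z) / (deriv h z + deriv g z)) > 0"
    using key_pos sp zD \<open>deriv h z + deriv g z \<noteq> 0\<close> by simp
  ultimately show ?thesis using Gd by metis
qed

lemma horiz_gen:
  assumes hol: "h holomorphic_on unit_disk" "g holomorphic_on unit_disk"
    and sum: "\<forall>z\<in>unit_disk. h z + g z = z / (1 - z)"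
    and sp: "\<forall>z\<in>unit_disk. norm (deriv g z) < norm (deriv h z)"
  shows "convex_in_direction 0 ((\<lambda>z. h z + cnj (g z)) ` unit_disk)"
  unfolding convex_in_direction_def
proof
  fix w :: complex
  define \<Psi> where "\<Psi> = (\<lambda>w. h (zw w) - g (zw w))"
  define U where "U x s = Re (\<Psi> (Complex x s))" for x s
  define V where "V x s = Im (\<Psi> (Complex x s))" for x s
  define F where "F = (\<lambda>z. h z + cnj (g z))"
  define d where "d = Im w"
  have PD: "\<And>w. Re w > -1/2 \<Longrightarrow> \<exists>D. (\<Psi> has_field_derivative D) (at w) \<and> Re D > 0"
    unfolding \<Psi>_def using psi_deriv[OF hol sum sp] by blast
  have N: "(U x' s' - U x s) * (x' - x) + (V x' s' - V x s) * (s' - s) > 0"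
    if "x > -1/2" "x' > -1/2" "(x, s) \<noteq> (x', s')" for x s x' s'
  proof -
    have "Complex x s \<noteq> Complex x' s'" using that by auto
    from noshiro[OF PD _ _ this] that
    have "Re ((\<Psi> (Complex x' s') - \<Psi> (Complex x s)) * cnj (Complex x' s' - Complex x s)) > 0" by simp
    moreover have "Re ((\<Psi> (Complex x' s') - \<Psi> (Complex x s)) * cnj (Complex x' s' - Complex x s))
       = (U x' s' - U x s) * (x' - x) + (V x' s' - V x s) * (s' - s)"
      by (simp add: U_def V_def algebra_simps)
    ultimately show ?thesis by simp
  qed
  have N': "(U x' (-s') - U x (-s)) * (x' - x) + ((- V x' (-s')) - (- V x (-s))) * (s' - s) > 0"
    if "x > -1/2" "x' > -1/2" "(x, s) \<noteq> (x', s')" for x s x' s'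
  proof -
    have "(x, -s) \<noteq> (x', -s')" using that by auto
    from N[OF that(1,2) this] show ?thesis by (simp add: algebra_simps)
  qed
  have mono: "V x s < V x s'" if "x > -1/2" "s < s'" for x s s'
    using mono_arc[OF hol sum sp that] by (simp add: V_def \<Psi>_def)
  have contV: "continuous_on UNIV (V x)" if xh: "x > -1/2" for x
  proof -
    have "isCont \<Psi> (Complex x s)" for s
    proof -
      obtain D where "(\<Psi> has_field_derivative D) (at (Complex x s))" using PD[of "Complex x s"] xh by auto
      thus ?thesis by (rule DERIV_isCont)
    qed
    moreover have "isCont (\<lambda>s. Complex x s) s" for s
    proof -
      have "(\<lambda>s. Complex x s) = (\<lambda>s. of_real x + of_real s * \<i>)" by (auto simp: complex_eq_iff)
      thus ?thesis by (simp add: continuous_intros)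
    qed
    ultimately have "isCont (\<lambda>s. \<Psi> (Complex x s)) s" for s
      using continuous_at_compose[of s "\<lambda>s. Complex x s" \<Psi>] by (simp add: o_def)
    hence "isCont (V x) s" for s unfolding V_def by (auto intro: continuous_Im)
    thus ?thesis by (simp add: continuous_at_imp_continuous_on)
  qed
  define X where "X = {x. -1/2 < x \<and> (\<exists>s. V x s = d)}"
  have Xint: "x0 \<in> X" if x1: "x1 \<in> X" and x2: "x2 \<in> X" and le: "x1 \<le> x0" "x0 \<le> x2" for x1 x2 x0
  proof (cases "x0 = x1 \<or> x0 = x2")
    case True thus ?thesis using x1 x2 by auto
  next
    case False
    hence lt: "x1 < x0" "x0 < x2" using le by auto
    obtain s1 where s1: "V x1 s1 = d" and x1h: "x1 > -1/2" using x1 by (auto simp: X_def)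
    obtain s2 where s2: "V x2 s2 = d" and x2h: "x2 > -1/2" using x2 by (auto simp: X_def)
    have x0h: "x0 > -1/2" using lt x1h by simp
    have up: "\<exists>\<sigma>. V x0 \<sigma> \<ge> d"
    proof (rule ccontr)
      assume "\<not> ?thesis"
      hence lo: "V x0 \<sigma> < d" for \<sigma> by (meson not_le)
      define \<delta> where "\<delta> = min (V x1 (s1 + 1)) (V x2 (s2 + 1)) - d"
      have "V x1 (s1 + 1) > d" "V x2 (s2 + 1) > d"
        using mono[OF x1h, of s1 "s1 + 1"] mono[OF x2h, of s2 "s2 + 1"] s1 s2 by auto
      hence dp: "\<delta> > 0" by (simp add: \<delta>_def)
      show False
      proof (rule valley[of U V x1 x0 x2 \<delta> "s1 + 1" "s2 + 1"])
        show "\<And>x s x' s'. x > -1/2 \<Longrightarrow> x' > -1/2 \<Longrightarrow> (x, s) \<noteq> (x', s') \<Longrightarrow>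
                 (U x' s' - U x s) * (x' - x) + (V x' s' - V x s) * (s' - s) > 0" by (rule N)
      next
        fix \<sigma> show "V x0 \<sigma> + \<delta> \<le> V x1 (s1 + 1)" using lo[of \<sigma>] by (simp add: \<delta>_def)
      next
        fix \<sigma> show "V x0 \<sigma> + \<delta> \<le> V x2 (s2 + 1)" using lo[of \<sigma>] by (simp add: \<delta>_def)
      qed (use lt x1h dp in auto)
    qed
    have down: "\<exists>\<sigma>. V x0 \<sigma> \<le> d"
    proof (rule ccontr)
      assume "\<not> ?thesis"
      hence hi: "V x0 \<sigma> > d" for \<sigma> by (meson not_le)
      define U' where "U' x s = U x (-s)" for x s
      define V' where "V' x s = - V x (-s)" for x s
      define \<delta> where "\<delta> = min (- V x1 (s1 - 1)) (- V x2 (s2 - 1)) + d"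
      have "V x1 (s1 - 1) < d" "V x2 (s2 - 1) < d"
        using mono[OF x1h, of "s1 - 1" s1] mono[OF x2h, of "s2 - 1" s2] s1 s2 by auto
      hence dp: "\<delta> > 0" by (simp add: \<delta>_def)
      show False
      proof (rule valley[of U' V' x1 x0 x2 \<delta> "1 - s1" "1 - s2"])
        show "\<And>x s x' s'. x > -1/2 \<Longrightarrow> x' > -1/2 \<Longrightarrow> (x, s) \<noteq> (x', s') \<Longrightarrow>
                 (U' x' s' - U' x s) * (x' - x) + (V' x' s' - V' x s) * (s' - s) > 0"
          unfolding U'_def V'_def by (rule N')
      next
        fix \<sigma> show "V' x0 \<sigma> + \<delta> \<le> V' x1 (1 - s1)" using hi[of "-\<sigma>"] by (simp add: \<delta>_def V'_def)
      next
        fix \<sigma> show "V' x0 \<sigma> + \<delta> \<le> V' x2 (1 - s2)" using hi[of "-\<sigma>"] by (simp add: \<delta>_def V'_def)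
      qed (use lt x1h dp in auto)
    qed
    obtain a where a: "V x0 a \<le> d" using down by auto
    obtain b where b: "V x0 b \<ge> d" using up by auto
    have ab: "a \<le> b"
    proof (rule ccontr)
      assume "\<not> a \<le> b"
      hence "V x0 b < V x0 a" using mono[OF x0h, of b a] by simp
      thus False using a b by simp
    qed
    obtain \<sigma> where "V x0 \<sigma> = d"
      using IVT'[OF a b ab continuous_on_subset[OF contV[OF x0h]]] by auto
    thus ?thesis using x0h by (auto simp: X_def)
  qed
  have Xconn: "connected X"
    unfolding is_interval_connected_1[symmetric] is_interval_1 using Xint by blast
  have L: "{w + of_real s * cis 0 | s. True} = {x. Im x = d}"
  proof (intro set_eqI iffI)
    fix x assume "x \<in> {w + of_real s * cis 0 | s. True}"
    thus "x \<in> {x. Im x = d}" by (auto simp: d_def)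
  next
    fix x assume "x \<in> {x. Im x = d}"
    hence "x = w + of_real (Re x - Re w) * cis 0" by (simp add: d_def complex_eq_iff)
    thus "x \<in> {w + of_real s * cis 0 | s. True}" by blast
  qed
  have Fzw: "F (zw (Complex x s)) = Complex x (V x s)" if "x > -1/2" for x s
  proof -
    have Rw: "Re (Complex x s) > -1/2" using that by simp
    have zD: "zw (Complex x s) \<in> unit_disk" using zw_in[OF Rw] .
    have "Re (F (zw (Complex x s))) = x" using Re_f[OF sum zD] zw_phi[OF Rw] F_def by simp
    moreover have "Im (F (zw (Complex x s))) = V x s" by (simp add: F_def V_def \<Psi>_def)
    ultimately show ?thesis by (simp add: complex_eq_iff)
  qed
  have eqs: "{x. Im x = d} \<inter> F ` unit_disk = (\<lambda>x. Complex x d) ` X"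
  proof
    show "{x. Im x = d} \<inter> F ` unit_disk \<subseteq> (\<lambda>x. Complex x d) ` X"
    proof
      fix y assume "y \<in> {x. Im x = d} \<inter> F ` unit_disk"
      then obtain z where z: "z \<in> unit_disk" "y = F z" "Im (F z) = d" by auto
      define x where "x = Re (z / (1 - z))"
      define s where "s = Im (z / (1 - z))"
      have xh: "x > -1/2" using phi_Re[OF z(1)] x_def by simp
      have ze: "z = zw (Complex x s)" using zw_param[OF z(1)] x_def s_def by simp
      have "F z = Complex x (V x s)" using Fzw[OF xh] ze by simp
      hence "V x s = d" "y = Complex x d" using z by auto
      thus "y \<in> (\<lambda>x. Complex x d) ` X" using xh by (auto simp: X_def)
    qed
  next
    show "(\<lambda>x. Complex x d) ` X \<subseteq> {x. Im x = d} \<inter> F ` unit_disk"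
    proof
      fix y assume "y \<in> (\<lambda>x. Complex x d) ` X"
      then obtain x s where xs: "y = Complex x d" "x > -1/2" "V x s = d" by (auto simp: X_def)
      have "zw (Complex x s) \<in> unit_disk" using zw_in[of "Complex x s"] xs by simp
      moreover have "F (zw (Complex x s)) = y" using Fzw[OF xs(2)] xs by simp
      ultimately show "y \<in> {x. Im x = d} \<inter> F ` unit_disk" using xs by force
    qed
  qed
  have contC: "continuous_on X (\<lambda>x. Complex x d)"
  proof -
    have "(\<lambda>x. Complex x d) = (\<lambda>x. of_real x + of_real d * \<i>)" by (auto simp: complex_eq_iff)
    thus ?thesis by (simp add: continuous_intros)
  qed
  have "connected ((\<lambda>x. Complex x d) ` X)" by (rule connected_continuous_image[OF contC Xconn])
  thus "connected ({w + of_real s * cis 0 | s. True} \<inter> (\<lambda>z. h z + cnj (g z)) ` unit_disk)"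
    using eqs L F_def by simp
qed



lemma sp_iff:
  fixes a b c :: complex assumes "a + b = c"
  shows "norm b < norm a \<longleftrightarrow> norm c ^ 2 < 2 * Re (a * cnj c)"
proof -
  have "norm b ^ 2 = norm c ^ 2 - 2 * Re (a * cnj c) + norm a ^ 2"
  proof -
    have b: "b = c - a" using assms by (metis add_diff_cancel_left')
    show ?thesis unfolding b using cmod_power2[of a] cmod_power2[of "c - a"] cmod_power2[of c]
      by (simp add: algebra_simps power2_eq_square)
  qed
  moreover have "norm b < norm a \<longleftrightarrow> norm b ^ 2 < norm a ^ 2"
    using abs_le_square_iff[of "norm a" "norm b"] by (simp add: not_le[symmetric])
  ultimately show ?thesis by linarith
qed

lemma deriv_comb:
  assumes "h1 holomorphic_on unit_disk" "h2 holomorphic_on unit_disk" "z \<in> unit_disk"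
  shows "deriv (\<lambda>z. of_real t * h1 z + of_real (1 - t) * h2 z) z = of_real t * deriv h1 z + of_real (1 - t) * deriv h2 z"
proof -
  have d1: "(h1 has_field_derivative deriv h1 z) (at z)" using holomorphic_derivI[OF assms(1) _ assms(3)] by simp
  have d2: "(h2 has_field_derivative deriv h2 z) (at z)" using holomorphic_derivI[OF assms(2) _ assms(3)] by simp
  have "((\<lambda>z. of_real t * h1 z + of_real (1 - t) * h2 z) has_field_derivative of_real t * deriv h1 z + of_real (1 - t) * deriv h2 z) (at z)"
    by (intro DERIV_add DERIV_cmult d1 d2)
  thus ?thesis by (rule DERIV_imp_deriv)
qed

theorem theorem2p5:
  fixes h1 g1 h2 g2 :: "complex \<Rightarrow> complex" and t :: real
  assumes "SH_pair h1 g1" and "SH_pair h2 g2"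
    and "\<forall>z\<in>unit_disk. h1 z + g1 z = z / (1 - z)"
    and "\<forall>z\<in>unit_disk. h2 z + g2 z = z / (1 - z)"
    and "0 \<le> t" and "t \<le> 1"
  shows "COD_H 0 (\<lambda>z. of_real t * (h1 z + cnj (g1 z)) + of_real (1 - t) * (h2 z + cnj (g2 z)))"
proof -
  note p1 = assms(1)[unfolded SH_pair_def] and p2 = assms(2)[unfolded SH_pair_def]
  define h where "h = (\<lambda>z. of_real t * h1 z + of_real (1 - t) * h2 z)"
  define g where "g = (\<lambda>z. of_real t * g1 z + of_real (1 - t) * g2 z)"
  have feq: "(\<lambda>z. of_real t * (h1 z + cnj (g1 z)) + of_real (1 - t) * (h2 z + cnj (g2 z))) = (\<lambda>z. h z + cnj (g z))"
    by (auto simp: h_def g_def algebra_simps)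
  have holh: "h holomorphic_on unit_disk" unfolding h_def using p1 p2 by (intro holomorphic_intros) auto
  have holg: "g holomorphic_on unit_disk" unfolding g_def using p1 p2 by (intro holomorphic_intros) auto
  have sum: "\<forall>z\<in>unit_disk. h z + g z = z / (1 - z)"
  proof
    fix z assume z: "z \<in> unit_disk"
    have "h z + g z = of_real t * (h1 z + g1 z) + of_real (1 - t) * (h2 z + g2 z)"
      by (simp add: h_def g_def algebra_simps)
    also have "\<dots> = of_real t * (z / (1 - z)) + of_real (1 - t) * (z / (1 - z))" using assms(3,4) z by simp
    also have "\<dots> = (of_real t + of_real (1 - t)) * (z / (1 - z))" by (simp only: distrib_right)
    also have "\<dots> = z / (1 - z)" by simp
    finally show "h z + g z = z / (1 - z)" .
  qed
  have dh: "deriv h z = of_real t * deriv h1 z + of_real (1 - t) * deriv h2 z" if "z \<in> unit_disk" for z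
    unfolding h_def using deriv_comb[of h1 h2 z t] p1 p2 that by auto
  have sp: "\<forall>z\<in>unit_disk. norm (deriv g z) < norm (deriv h z)"
  proof
    fix z assume z: "z \<in> unit_disk"
    define c where "c = 1 / (1 - z)^2"
    have s1: "deriv h1 z + deriv g1 z = c" using deriv_sum_phi[of h1 g1 z] p1 assms(3) z c_def by auto
    have s2: "deriv h2 z + deriv g2 z = c" using deriv_sum_phi[of h2 g2 z] p2 assms(4) z c_def by auto
    have s: "deriv h z + deriv g z = c" using deriv_sum_phi[OF holh holg sum z] c_def by simp
    have q1: "norm (deriv g1 z) < norm (deriv h1 z)"
    proof -
      have "deriv h1 z \<noteq> 0" "norm (deriv g1 z / deriv h1 z) < 1" using p1 z by auto
      thus ?thesis by (simp add: norm_divide divide_less_eq)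
    qed
    have q2: "norm (deriv g2 z) < norm (deriv h2 z)"
    proof -
      have "deriv h2 z \<noteq> 0" "norm (deriv g2 z / deriv h2 z) < 1" using p2 z by auto
      thus ?thesis by (simp add: norm_divide divide_less_eq)
    qed
    have r1: "norm c ^ 2 < 2 * Re (deriv h1 z * cnj c)" using sp_iff[OF s1] q1 by simp
    have r2: "norm c ^ 2 < 2 * Re (deriv h2 z * cnj c)" using sp_iff[OF s2] q2 by simp
    have "Re (deriv h z * cnj c) = t * Re (deriv h1 z * cnj c) + (1 - t) * Re (deriv h2 z * cnj c)"
      unfolding dh[OF z] by (simp add: algebra_simps)
    moreover have "t * (norm c ^ 2) \<le> t * (2 * Re (deriv h1 z * cnj c))"
      using r1 assms(5) by (intro mult_left_mono) auto
    moreover have "(1 - t) * (norm c ^ 2) \<le> (1 - t) * (2 * Re (deriv h2 z * cnj c))"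
      using r2 assms(6) by (intro mult_left_mono) auto
    moreover have "t * (norm c ^ 2) < t * (2 * Re (deriv h1 z * cnj c)) \<or> (1 - t) * (norm c ^ 2) < (1 - t) * (2 * Re (deriv h2 z * cnj c))"
      using r1 r2 assms(5,6) by (cases "t = 0") auto
    ultimately have "norm c ^ 2 < 2 * Re (deriv h z * cnj c)" by (simp add: algebra_simps) linarith
    thus "norm (deriv g z) < norm (deriv h z)" using sp_iff[OF s] by simp
  qed
  have SH: "SH_pair h g"
    unfolding SH_pair_def
  proof (intro conjI holh holg ballI)
    fix z assume z: "z \<in> unit_disk"
    have "norm (deriv g z) < norm (deriv h z)" using sp z by auto
    thus "deriv h z \<noteq> 0" by auto
    thus "norm (deriv g z / deriv h z) < 1" using \<open>norm (deriv g z) < norm (deriv h z)\<close>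
      by (simp add: norm_divide divide_less_eq)
  next
    show "inj_on (\<lambda>z. h z + cnj (g z)) unit_disk" by (rule inj_gen[OF holh holg sum sp])
  next
    show "h 0 + cnj (g 0) = 0"
    proof -
      have "h 0 + cnj (g 0) = of_real t * (h1 0 + cnj (g1 0)) + of_real (1 - t) * (h2 0 + cnj (g2 0))"
        by (simp add: h_def g_def algebra_simps)
      thus ?thesis using p1 p2 by simp
    qed
  next
    show "deriv h 0 = 1" using dh[of 0] p1 p2 by (simp add: algebra_simps)
  qed
  show ?thesis
    unfolding COD_H_def feq
  proof (intro conjI)
    show "in_SH (\<lambda>z. h z + cnj (g z))" unfolding in_SH_def using SH by blast
    show "convex_in_direction 0 ((\<lambda>z. h z + cnj (g z)) ` unit_disk)" by (rule horiz_gen[OF holh holg sum sp])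
    show "convex_in_direction (0 + pi / 2) ((\<lambda>z. h z + cnj (g z)) ` unit_disk)"
      using vert_gen[OF holh holg sum] by simp
  qed
qed

end
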